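(* Let $G$ be a finite simple undirected connected graph, and let $c:V(G)\to \mathbb{R}_{>0}$ and $\kappa:V(G)\to \mathbb{Z}$ be functions such that $0\leq \kappa(u)\leq d_G(u)$ for every vertex $u$ of $G$. Then $$\alpha(G,c,\kappa) = \sum_{u\in V(G)} \frac{c(u)(\kappa(u)+1)}{d_G(u)+1}$$ holds if and only if either (i) $\kappa(u)=d_G(u)$ for every vertex $u$ of $G$, or (ii) $G$ is a clique (complete graph) and both $c$ and $\kappa$ are constant on $V(G)$.
   Context: $d_G(u)$ denotes the degree of $u$ in $G$, and $[n]=\{1,\dots,n\}$. For a set $I\subseteq V(G)$, its $c$-weight is $c(I)=\sum_{u\in I}c(u)$. A set $I\subseteq V(G)$ is called $\kappa$-degenerate in $G$ if there is a linear ordering $u_1,\ldots,u_k$ of the vertices of $I$ such that for every $i\in[k]$, $u_i$ has at most $\kappa(u_i)$ neighbors in $\{u_j: j\in[i-1]\}$. $\alpha(G,c,\kappa)$ denotes the maximum $c$-weight of a $\kappa$-degenerate set of vertices of $G$. (It is known that always $\alpha(G,c,\kappa)\geq \sum_{u\in V(G)} \frac{c(u)(\kappa(u)+1)}{d_G(u)+1}$.) *)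

theory Defs
  imports "HOL-Analysis.Analysis"
begin

definition simple_graph :: "'a set \<Rightarrow> ('a \<Rightarrow> 'a \<Rightarrow> bool) \<Rightarrow> bool" where
  "simple_graph V E \<longleftrightarrow> finite V \<and> (\<forall>u v. E u v \<longrightarrow> u \<in> V \<and> v \<in> V)
     \<and> (\<forall>u v. E u v \<longrightarrow> E v u) \<and> (\<forall>u. \<not> E u u)"

definition connected_graph :: "'a set \<Rightarrow> ('a \<Rightarrow> 'a \<Rightarrow> bool) \<Rightarrow> bool" where
  "connected_graph V E \<longleftrightarrow> (\<forall>u\<in>V. \<forall>v\<in>V. E\<^sup>*\<^sup>* u v)"

definition degree :: "'a set \<Rightarrow> ('a \<Rightarrow> 'a \<Rightarrow> bool) \<Rightarrow> 'a \<Rightarrow> nat" where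
  "degree V E u = card {v \<in> V. E u v}"

definition is_clique :: "'a set \<Rightarrow> ('a \<Rightarrow> 'a \<Rightarrow> bool) \<Rightarrow> bool" where
  "is_clique V E \<longleftrightarrow> (\<forall>u\<in>V. \<forall>v\<in>V. u \<noteq> v \<longrightarrow> E u v)"

definition kdegenerate :: "'a set \<Rightarrow> ('a \<Rightarrow> 'a \<Rightarrow> bool) \<Rightarrow> ('a \<Rightarrow> int) \<Rightarrow> 'a set \<Rightarrow> bool" where
  "kdegenerate V E \<kappa> I \<longleftrightarrow> I \<subseteq> V \<and> (\<exists>xs. distinct xs \<and> set xs = I \<and>
     (\<forall>i < length xs. int (card {j. j < i \<and> E (xs ! i) (xs ! j)}) \<le> \<kappa> (xs ! i)))"

definition alpha :: "'a set \<Rightarrow> ('a \<Rightarrow> 'a \<Rightarrow> bool) \<Rightarrow> ('a \<Rightarrow> real) \<Rightarrow> ('a \<Rightarrow> int) \<Rightarrow> real" where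
  "alpha V E c \<kappa> = Max ((\<lambda>I. \<Sum>u\<in>I. c u) ` {I. kdegenerate V E \<kappa> I})"

end

theory Submission
  imports Defs "HOL-Combinatorics.Multiset_Permutations"
begin


fun gw :: "('a \<Rightarrow> 'a \<Rightarrow> bool) \<Rightarrow> ('a \<Rightarrow> int) \<Rightarrow> ('a \<Rightarrow> real) \<Rightarrow> 'a list \<Rightarrow> real" where
  "gw E k c [] = 0"
| "gw E k c (x # xs) = gw E k c xs + (if int (card {w \<in> set xs. E x w}) \<le> k x then c x else 0)"

fun gl :: "('a \<Rightarrow> 'a \<Rightarrow> bool) \<Rightarrow> ('a \<Rightarrow> int) \<Rightarrow> 'a list \<Rightarrow> 'a list" where
  "gl E k [] = []"
| "gl E k (x # xs) = (if int (card {w \<in> set xs. E x w}) \<le> k x then x # gl E k xs else gl E k xs)"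

definition Qd :: "('a \<Rightarrow> 'a \<Rightarrow> bool) \<Rightarrow> ('a \<Rightarrow> int) \<Rightarrow> 'a list \<Rightarrow> bool" where
  "Qd E k zs \<longleftrightarrow> (\<forall>i < length zs. int (card {j. j < i \<and> E (zs ! i) (zs ! j)}) \<le> k (zs ! i))"

lemma gl_set: "set (gl E k xs) \<subseteq> set xs"
  by (induction xs) auto

lemma gl_distinct: "distinct xs \<Longrightarrow> distinct (gl E k xs)"
  by (induction xs) (use gl_set in fastforce)+

lemma gw_gl: "distinct xs \<Longrightarrow> gw E k c xs = (\<Sum>u\<in>set (gl E k xs). c u)"
proof (induction xs)
  case Nil then show ?case by simp
next
  case (Cons x xs)
  have "x \<notin> set (gl E k xs)" using Cons.prems gl_set by fastforce
  then show ?case using Cons by auto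
qed

lemma Qd_snoc: "Qd E k (zs @ [x]) \<longleftrightarrow> Qd E k zs \<and> int (card {j. j < length zs \<and> E x (zs ! j)}) \<le> k x"
proof -
  have A: "{j. j < i \<and> E ((zs @ [x]) ! i) ((zs @ [x]) ! j)} = {j. j < i \<and> E (zs ! i) (zs ! j)}"
    if "i < length zs" for i using that by (auto simp: nth_append)
  have B: "{j. j < length zs \<and> E ((zs @ [x]) ! length zs) ((zs @ [x]) ! j)} = {j. j < length zs \<and> E x (zs ! j)}"
    by (auto simp: nth_append)
  have C: "(zs @ [x]) ! i = zs ! i" if "i < length zs" for i using that by (simp add: nth_append)
  show ?thesis unfolding Qd_def
  proof (intro iffI conjI allI impI)
    assume H: "\<forall>i<length (zs @ [x]). int (card {j. j < i \<and> E ((zs @ [x]) ! i) ((zs @ [x]) ! j)}) \<le> k ((zs @ [x]) ! i)"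
    show "int (card {j. j < i \<and> E (zs ! i) (zs ! j)}) \<le> k (zs ! i)" if "i < length zs" for i
      using H[rule_format, of i] that A[OF that] C[OF that] by simp
    show "int (card {j. j < length zs \<and> E x (zs ! j)}) \<le> k x"
      using H[rule_format, of "length zs"] B by simp
  next
    fix i assume H1: "(\<forall>i<length zs. int (card {j. j < i \<and> E (zs ! i) (zs ! j)}) \<le> k (zs ! i)) \<and>
       int (card {j. j < length zs \<and> E x (zs ! j)}) \<le> k x" and i: "i < length (zs @ [x])"
    show "int (card {j. j < i \<and> E ((zs @ [x]) ! i) ((zs @ [x]) ! j)}) \<le> k ((zs @ [x]) ! i)"
    proof (cases "i < length zs")
      case True then show ?thesis using H1 A[OF True] C[OF True] by simp
    next
      case False then have "i = length zs" using i by simp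
      then show ?thesis using H1 B by simp
    qed
  qed
qed

lemma card_idx: "distinct zs \<Longrightarrow> card {j. j < length zs \<and> P (zs ! j)} = card {w \<in> set zs. P w}"
proof -
  assume d: "distinct zs"
  have "{w \<in> set zs. P w} = (nth zs) ` {j. j < length zs \<and> P (zs ! j)}"
    by (auto simp: in_set_conv_nth)
  moreover have "inj_on (nth zs) {j. j < length zs \<and> P (zs ! j)}"
    using d by (intro inj_on_nth) auto
  ultimately show ?thesis by (simp add: card_image)
qed

lemma gl_Qd: "distinct xs \<Longrightarrow> Qd E k (rev (gl E k xs))"
proof (induction xs)
  case Nil then show ?case by (simp add: Qd_def)
next
  case (Cons x xs)
  have d: "distinct (gl E k xs)" using Cons.prems gl_distinct by auto
  show ?case
  proof (cases "int (card {w \<in> set xs. E x w}) \<le> k x")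
    case True
    have "card {j. j < length (rev (gl E k xs)) \<and> E x (rev (gl E k xs) ! j)} = card {w \<in> set (gl E k xs). E x w}"
      using card_idx[of "rev (gl E k xs)" "E x"] d by simp
    also have "\<dots> \<le> card {w \<in> set xs. E x w}"
      by (rule card_mono) (use gl_set[of E k xs] in auto)
    finally show ?thesis using True Cons by (simp add: Qd_snoc)
  qed (use Cons in simp)
qed

lemma gl_kdeg: "xs \<in> permutations_of_set V \<Longrightarrow> kdegenerate V E k (set (gl E k xs))"
  unfolding kdegenerate_def
  apply (rule conjI)
  using gl_set permutations_of_setD apply metis
  apply (rule exI[of _ "rev (gl E k xs)"])
  using gl_Qd[of xs E k] gl_distinct[of xs E k] permutations_of_setD[of xs V] by (simp add: Qd_def)

lemma gw_app: "set zs = set zs' \<Longrightarrow> gw E k c (rs @ zs) - gw E k c zs = gw E k c (rs @ zs') - gw E k c zs'"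
  by (induction rs) auto




definition pr :: "int \<Rightarrow> nat \<Rightarrow> real" where
  "pr k d = (if int d \<le> k then 1 else (of_int k + 1) / (real d + 1))"

definition fW :: "('a \<Rightarrow> 'a \<Rightarrow> bool) \<Rightarrow> ('a \<Rightarrow> real) \<Rightarrow> ('a \<Rightarrow> int) \<Rightarrow> 'a set \<Rightarrow> real" where
  "fW E c k W = (\<Sum>u\<in>W. c u * pr (k u) (degree W E u))"

lemma pr_arith: "k \<ge> 0 \<Longrightarrow> real d * pr k (d - 1) + (if int d \<le> k then 1 else 0) = (real d + 1) * pr k d"
proof (cases "int d \<le> k")
  case True then show ?thesis by (simp add: pr_def)
next
  case False
  assume k: "k \<ge> 0"
  then have d1: "d \<ge> 1" using False by linarith
  show ?thesis
  proof (cases "int (d - 1) \<le> k")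
    case True
    then have "of_int k = real d - 1" using False d1 by linarith
    then show ?thesis using True False d1 by (simp add: pr_def field_simps)
  next
    case F2: False
    have "real (d - 1) + 1 = real d" using d1 by simp
    then show ?thesis using F2 False d1 by (simp add: pr_def field_simps)
  qed
qed

lemma vertex_sum:
  assumes fin: "finite W" and u: "u \<in> W" and irr: "\<And>v. \<not> E v v"
  shows "(\<Sum>x\<in>W - {u}. pr k (degree (W - {x}) E u))
    = real (degree W E u) * pr k (degree W E u - 1) + real (card W - 1 - degree W E u) * pr k (degree W E u)"
proof -
  define A where "A = {x \<in> W. E u x}"
  define B where "B = {x \<in> W - {u}. \<not> E u x}"
  have dA: "degree W E u = card A" unfolding A_def degree_def by simp
  have WAB: "W - {u} = A \<union> B" "A \<inter> B = {}" using irr u unfolding A_def B_def by auto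
  have fA: "finite A" "finite B" using fin unfolding A_def B_def by auto
  have cB: "card B = card W - 1 - card A"
  proof -
    have "card (W - {u}) = card A + card B" using WAB fA card_Un_disjoint by metis
    moreover have "card (W - {u}) = card W - 1" using u fin by simp
    ultimately show ?thesis by simp
  qed
  have degA: "degree (W - {x}) E u = card A - 1" if "x \<in> A" for x
  proof -
    have "{w \<in> W - {x}. E u w} = A - {x}" unfolding A_def by auto
    then show ?thesis using that fA unfolding degree_def by simp
  qed
  have degB: "degree (W - {x}) E u = card A" if "x \<in> B" for x
  proof -
    have "{w \<in> W - {x}. E u w} = A" using that unfolding A_def B_def by auto
    then show ?thesis unfolding degree_def by simp
  qed
  have "(\<Sum>x\<in>W - {u}. pr k (degree (W - {x}) E u)) = (\<Sum>x\<in>A. pr k (degree (W - {x}) E u)) + (\<Sum>x\<in>B. pr k (degree (W - {x}) E u))"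
    using WAB fA by (simp add: sum.union_disjoint)
  also have "\<dots> = (\<Sum>x\<in>A. pr k (card A - 1)) + (\<Sum>x\<in>B. pr k (card A))"
    using degA degB by simp
  also have "\<dots> = real (card A) * pr k (card A - 1) + real (card B) * pr k (card A)" by simp
  finally show ?thesis using dA cB by simp
qed

lemma sum_identity:
  assumes fin: "finite W" and irr: "\<And>v. \<not> E v v" and kp: "\<And>u. u \<in> W \<Longrightarrow> k u \<ge> 0"
  shows "(\<Sum>xs\<in>permutations_of_set W. gw E k c xs) = fact (card W) * fW E c k W"
  using fin kp
proof (induction "card W" arbitrary: W)
  case 0
  then have "W = {}" by simp
  then show ?case by (simp add: fW_def)
next
  case (Suc n)
  then have ne: "W \<noteq> {}" by auto
  define Bn where "Bn x = (if int (degree W E x) \<le> k x then c x else 0)" for x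
  have fin2: "finite (W - {x})" for x using Suc by simp
  have IH: "(\<Sum>xs\<in>permutations_of_set (W - {x}). gw E k c xs) = fact n * fW E c k (W - {x})" if "x \<in> W" for x
  proof -
    have "card (W - {x}) = n" using Suc that by simp
    then show ?thesis using Suc.hyps(1)[of "W - {x}"] Suc.prems that by auto
  qed
  have step: "gw E k c (x # ys) = gw E k c ys + Bn x" if "x \<in> W" "ys \<in> permutations_of_set (W - {x})" for x ys
  proof -
    have "set ys = W - {x}" using that permutations_of_setD by metis
    then have "{w \<in> set ys. E x w} = {w \<in> W. E x w}" using irr by auto
    then show ?thesis by (simp add: Bn_def degree_def)
  qed
  have "(\<Sum>xs\<in>permutations_of_set W. gw E k c xs) = (\<Sum>x\<in>W. \<Sum>xs\<in>(\<lambda>xs. x # xs) ` permutations_of_set (W - {x}). gw E k c xs)"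
    unfolding permutations_of_set_nonempty[OF ne]
    by (rule sum.UNION_disjoint) (use Suc.prems in auto)
  also have "\<dots> = (\<Sum>x\<in>W. \<Sum>ys\<in>permutations_of_set (W - {x}). gw E k c (x # ys))"
    apply (rule sum.cong[OF refl])
    apply (subst sum.reindex)
    by (auto simp: inj_on_def)
  also have "\<dots> = (\<Sum>x\<in>W. \<Sum>ys\<in>permutations_of_set (W - {x}). gw E k c ys + Bn x)"
    using step by simp
  also have "\<dots> = (\<Sum>x\<in>W. fact n * fW E c k (W - {x}) + fact n * Bn x)"
  proof (intro sum.cong refl)
    fix x assume x: "x \<in> W"
    have "card (W - {x}) = n" using Suc x by simp
    then show "(\<Sum>ys\<in>permutations_of_set (W - {x}). gw E k c ys + Bn x) = fact n * fW E c k (W - {x}) + fact n * Bn x"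
      using IH[OF x] fin2[of x] by (simp add: sum.distrib)
  qed
  also have "\<dots> = fact n * (\<Sum>x\<in>W. fW E c k (W - {x}) + Bn x)"
    by (simp add: sum_distrib_left distrib_left)
  also have "(\<Sum>x\<in>W. fW E c k (W - {x}) + Bn x) = real (Suc n) * fW E c k W"
  proof -
    have "(\<Sum>x\<in>W. fW E c k (W - {x})) = (\<Sum>x\<in>W. \<Sum>u\<in>{u \<in> W. u \<noteq> x}. c u * pr (k u) (degree (W - {x}) E u))"
      unfolding fW_def by (intro sum.cong refl) (auto intro: sum.cong)
    also have "\<dots> = (\<Sum>u\<in>W. \<Sum>x\<in>{x \<in> W. u \<noteq> x}. c u * pr (k u) (degree (W - {x}) E u))"
      using Suc.prems(1) by (rule sum.swap_restrict) (use Suc.prems(1) in simp)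
    also have "\<dots> = (\<Sum>u\<in>W. c u * (\<Sum>x\<in>W - {u}. pr (k u) (degree (W - {x}) E u)))"
      by (intro sum.cong refl) (auto simp: sum_distrib_left intro!: sum.cong)
    finally have S1: "(\<Sum>x\<in>W. fW E c k (W - {x})) = (\<Sum>u\<in>W. c u * (\<Sum>x\<in>W - {u}. pr (k u) (degree (W - {x}) E u)))" .
    have per: "c u * (\<Sum>x\<in>W - {u}. pr (k u) (degree (W - {x}) E u)) + Bn u = real (Suc n) * (c u * pr (k u) (degree W E u))"
      if u: "u \<in> W" for u
    proof -
      define d where "d = degree W E u"
      have dle: "d \<le> card W - 1"
      proof -
        have "{w \<in> W. E u w} \<subseteq> W - {u}" using irr by auto
        then have "d \<le> card (W - {u})" unfolding d_def degree_def by (intro card_mono) (use Suc.prems in auto)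
        then show ?thesis using u Suc.prems by simp
      qed
      have cw: "card W = Suc n" using Suc by simp
      have "c u * (\<Sum>x\<in>W - {u}. pr (k u) (degree (W - {x}) E u)) + Bn u
          = c u * (real d * pr (k u) (d - 1) + (if int d \<le> k u then 1 else 0)) + c u * real (card W - 1 - d) * pr (k u) d"
        unfolding vertex_sum[OF Suc.prems(1) u irr] d_def[symmetric] Bn_def by (simp add: algebra_simps)
      also have "\<dots> = c u * ((real d + 1) * pr (k u) d) + c u * real (card W - 1 - d) * pr (k u) d"
        using pr_arith[of "k u" d] Suc.prems(2)[OF u] by simp
      also have "\<dots> = c u * pr (k u) d * (real d + 1 + real (card W - 1 - d))" by (simp add: algebra_simps)
      also have "real d + 1 + real (card W - 1 - d) = real (Suc n)" using dle cw by simp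
      finally show ?thesis unfolding d_def by (simp add: algebra_simps)
    qed
    have "(\<Sum>x\<in>W. fW E c k (W - {x}) + Bn x) = (\<Sum>u\<in>W. c u * (\<Sum>x\<in>W - {u}. pr (k u) (degree (W - {x}) E u)) + Bn u)"
      by (simp add: sum.distrib S1)
    also have "\<dots> = (\<Sum>u\<in>W. real (Suc n) * (c u * pr (k u) (degree W E u)))"
      using per by simp
    also have "\<dots> = real (Suc n) * fW E c k W" unfolding fW_def by (simp add: sum_distrib_left)
    finally show ?thesis .
  qed
  finally have "(\<Sum>xs\<in>permutations_of_set W. gw E k c xs) = fact n * (real (Suc n) * fW E c k W)" .
  moreover have "(fact (Suc n) :: real) = fact n * real (Suc n)" by (simp add: algebra_simps)
  ultimately show ?case using Suc.hyps(2)[symmetric] by simp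
qed




lemma alpha_facts:
  assumes sg: "simple_graph V E"
  shows "\<And>I. kdegenerate V E k I \<Longrightarrow> (\<Sum>u\<in>I. c u) \<le> alpha V E c k"
    and "\<exists>I. kdegenerate V E k I \<and> alpha V E c k = (\<Sum>u\<in>I. c u)"
proof -
  have fin: "finite V" using sg by (simp add: simple_graph_def)
  have "{I. kdegenerate V E k I} \<subseteq> Pow V" by (auto simp: kdegenerate_def)
  then have fS: "finite {I. kdegenerate V E k I}" using fin finite_subset by blast
  have "kdegenerate V E k {}" unfolding kdegenerate_def by (intro conjI exI[of _ "[]"]) auto
  then have ne: "(\<lambda>I. \<Sum>u\<in>I. c u) ` {I. kdegenerate V E k I} \<noteq> {}" by blast
  show "\<And>I. kdegenerate V E k I \<Longrightarrow> (\<Sum>u\<in>I. c u) \<le> alpha V E c k"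
    unfolding alpha_def using fS by (intro Max_ge) auto
  show "\<exists>I. kdegenerate V E k I \<and> alpha V E c k = (\<Sum>u\<in>I. c u)"
    using Max_in[OF finite_imageI[OF fS] ne] unfolding alpha_def by auto
qed

lemma alpha_ge_gw:
  assumes sg: "simple_graph V E" and xs: "xs \<in> permutations_of_set V"
  shows "gw E k c xs \<le> alpha V E c k"
  using alpha_facts(1)[OF sg gl_kdeg[OF xs]] gw_gl[of xs E k c] permutations_of_setD(2)[OF xs] by simp

lemma sg_props:
  assumes "simple_graph V E"
  shows "finite V" "\<And>v. \<not> E v v" "\<And>u v. E u v \<Longrightarrow> E v u" "\<And>u v. E u v \<Longrightarrow> u \<in> V" "\<And>u v. E u v \<Longrightarrow> v \<in> V"
  using assms unfolding simple_graph_def by blast+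

lemma alpha_ge_f:
  assumes sg: "simple_graph V E" and kp: "\<And>u. u \<in> V \<Longrightarrow> k u \<ge> 0"
  shows "fW E c k V \<le> alpha V E c k"
proof -
  have fin: "finite V" using sg_props[OF sg] by simp
  have irr: "\<And>v. \<not> E v v" using sg by (simp add: simple_graph_def)
  have "fact (card V) * fW E c k V = (\<Sum>xs\<in>permutations_of_set V. gw E k c xs)"
    using sum_identity[where W=V and E=E and k=k and c=c, OF fin irr kp] by simp
  also have "\<dots> \<le> (\<Sum>xs\<in>permutations_of_set V. alpha V E c k)"
    by (intro sum_mono alpha_ge_gw[OF sg])
  also have "\<dots> = fact (card V) * alpha V E c k" using fin by simp
  finally show ?thesis by simp
qed

lemma all_eq:
  assumes sg: "simple_graph V E" and kp: "\<And>u. u \<in> V \<Longrightarrow> k u \<ge> 0"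
    and eq: "alpha V E c k = fW E c k V" and xs: "xs \<in> permutations_of_set V"
  shows "gw E k c xs = alpha V E c k"
proof -
  have fin: "finite V" using sg_props[OF sg] by simp
  have irr: "\<And>v. \<not> E v v" using sg by (simp add: simple_graph_def)
  have "(\<Sum>ys\<in>permutations_of_set V. alpha V E c k - gw E k c ys)
      = fact (card V) * alpha V E c k - (\<Sum>ys\<in>permutations_of_set V. gw E k c ys)"
    using fin by (simp add: sum_subtractf)
  also have "\<dots> = 0" using sum_identity[where W=V and E=E and k=k and c=c, OF fin irr kp] eq by simp
  finally have "\<forall>ys\<in>permutations_of_set V. alpha V E c k - gw E k c ys = 0"
    by (subst sum_nonneg_eq_0_iff[symmetric]) (auto intro: alpha_ge_gw[OF sg])
  then show ?thesis using xs by simp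
qed

lemma key:
  assumes sg: "simple_graph V E" and all: "\<And>xs. xs \<in> permutations_of_set V \<Longrightarrow> gw E k c xs = a"
    and cp: "\<And>u. u \<in> V \<Longrightarrow> c u > 0"
    and x: "x \<in> V" and y: "y \<in> V" and exy: "E x y" and P: "P \<subseteq> V - {x, y}"
  shows "(int (card {w \<in> P. E x w}) = k x \<longleftrightarrow> int (card {w \<in> P. E y w}) = k y)
    \<and> (int (card {w \<in> P. E x w}) = k x \<longrightarrow> c x = c y)"
proof -
  have fin: "finite V" and xy: "x \<noteq> y" and eyx: "E y x" using sg_props[OF sg] exy by metis+
  have fP: "finite P" using P fin finite_subset by blast
  obtain ps where ps: "set ps = P" "distinct ps" using finite_distinct_list[OF fP] by blast
  obtain rs where rs: "set rs = V - {x, y} - P" "distinct rs"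
    using finite_distinct_list[of "V - {x, y} - P"] fin by blast
  have "rs @ y # x # ps \<in> permutations_of_set V" "rs @ x # y # ps \<in> permutations_of_set V"
    by (intro permutations_of_setI; use ps rs P x y xy in auto)+
  then have "gw E k c (rs @ y # x # ps) = gw E k c (rs @ x # y # ps)" using all by simp
  moreover have "gw E k c (rs @ y # x # ps) - gw E k c (y # x # ps) = gw E k c (rs @ x # y # ps) - gw E k c (x # y # ps)"
    by (rule gw_app) auto
  ultimately have EQ: "gw E k c (y # x # ps) = gw E k c (x # y # ps)" by simp
  define a' where "a' = card {w \<in> P. E x w}"
  define b where "b = card {w \<in> P. E y w}"
  have xP: "x \<notin> P" "y \<notin> P" using P by auto
  have ca: "card {w \<in> set (y # ps). E x w} = Suc a'"
  proof -
    have "{w \<in> set (y # ps). E x w} = insert y {w \<in> P. E x w}" using ps exy by auto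
    then show ?thesis using xP fP unfolding a'_def by simp
  qed
  have cb: "card {w \<in> set (x # ps). E y w} = Suc b"
  proof -
    have "{w \<in> set (x # ps). E y w} = insert x {w \<in> P. E y w}" using ps eyx by auto
    then show ?thesis using xP fP unfolding b_def by simp
  qed
  have "(if int a' \<le> k x then c x else 0) + (if int (Suc b) \<le> k y then c y else 0)
      = (if int b \<le> k y then c y else 0) + (if int (Suc a') \<le> k x then c x else 0)"
    using EQ ca cb ps unfolding a'_def b_def by simp
  moreover have "c x > 0" "c y > 0" using cp x y by auto
  ultimately have "(int a' = k x \<longleftrightarrow> int b = k y) \<and> (int a' = k x \<longrightarrow> c x = c y)"
    by (auto split: if_splits)
  then show ?thesis unfolding a'_def b_def .
qed




locale ctx =
  fixes V :: "'a set" and E :: "'a \<Rightarrow> 'a \<Rightarrow> bool" and c :: "'a \<Rightarrow> real" and k :: "'a \<Rightarrow> int" and a :: real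
  assumes sg: "simple_graph V E"
    and cp: "\<And>u. u \<in> V \<Longrightarrow> c u > 0"
    and kr: "\<And>u. u \<in> V \<Longrightarrow> 0 \<le> k u \<and> k u \<le> int (degree V E u)"
    and allp: "\<And>xs. xs \<in> permutations_of_set V \<Longrightarrow> gw E k c xs = a"
begin

lemma fin: "finite V" and irr: "\<not> E v v" and sym: "E u v \<Longrightarrow> E v u"
  and inV1: "E u v \<Longrightarrow> u \<in> V" and inV2: "E u v \<Longrightarrow> v \<in> V"
  using sg unfolding simple_graph_def by blast+

lemma K: "x \<in> V \<Longrightarrow> y \<in> V \<Longrightarrow> E x y \<Longrightarrow> P \<subseteq> V - {x, y} \<Longrightarrow>
    (int (card {w \<in> P. E x w}) = k x \<longleftrightarrow> int (card {w \<in> P. E y w}) = k y)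
    \<and> (int (card {w \<in> P. E x w}) = k x \<longrightarrow> c x = c y)"
  by (rule key[OF sg allp cp]) auto

lemma finN: "finite {w \<in> V. E x w}" using fin by simp

lemma step1:
  assumes x: "x \<in> V" and y: "y \<in> V" and exy: "E x y" and kx: "k x = int (degree V E x)"
  shows "k y = int (degree V E y)"
proof (rule ccontr)
  assume "k y \<noteq> int (degree V E y)"
  then have lt: "k y < int (degree V E y)" using kr[OF y] by simp
  define S where "S = {w \<in> V. E y w} - {x}"
  have xin: "x \<in> {w \<in> V. E y w}" using sym[OF exy] x by simp
  have cS: "card S = degree V E y - 1" unfolding S_def degree_def using xin finN by simp
  have "nat (k y) \<le> card S" using lt kr[OF y] cS by linarith
  then obtain P where P: "P \<subseteq> S" "card P = nat (k y)" "finite P" by (rule obtain_subset_with_card_n)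
  have PV: "P \<subseteq> V - {x, y}" using P(1) irr unfolding S_def by auto
  have "{w \<in> P. E y w} = P" using P(1) unfolding S_def by auto
  then have "int (card {w \<in> P. E y w}) = k y" using P(2) kr[OF y] by simp
  then have "int (card {w \<in> P. E x w}) = k x" using K[OF x y exy PV] by simp
  moreover have "card {w \<in> P. E x w} \<le> card ({w \<in> V. E x w} - {y})"
    using PV finN by (intro card_mono) auto
  moreover have "card ({w \<in> V. E x w} - {y}) = degree V E x - 1" "degree V E x \<ge> 1"
    using finN exy y unfolding degree_def by (auto simp: card_gt_0_iff Suc_le_eq)
  ultimately show False using kx by linarith
qed

context
  assumes lt: "\<And>u. u \<in> V \<Longrightarrow> k u < int (degree V E u)"
begin

lemma getP:
  assumes x: "x \<in> V" and y: "y \<in> V" and exy: "E x y"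
  obtains P where "P \<subseteq> {w \<in> V. E x w} - {y}" "int (card P) = k x" "P \<subseteq> V - {x, y}"
proof -
  have yin: "y \<in> {w \<in> V. E x w}" using exy y by simp
  have cS: "card ({w \<in> V. E x w} - {y}) = degree V E x - 1" unfolding degree_def using yin finN by simp
  have "nat (k x) \<le> card ({w \<in> V. E x w} - {y})" using lt[OF x] kr[OF x] cS by linarith
  then obtain P where P: "P \<subseteq> {w \<in> V. E x w} - {y}" "card P = nat (k x)" "finite P" by (rule obtain_subset_with_card_n)
  moreover have "P \<subseteq> V - {x, y}" using P(1) irr by auto
  ultimately show ?thesis using that kr[OF x] by auto
qed

lemma nbr_sub:
  assumes x: "x \<in> V" and y: "y \<in> V" and exy: "E x y"
  shows "{w \<in> V. E y w} - {x} \<subseteq> {w \<in> V. E x w}"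
proof
  fix z assume z: "z \<in> {w \<in> V. E y w} - {x}"
  show "z \<in> {w \<in> V. E x w}"
  proof (rule ccontr)
    assume nz: "z \<notin> {w \<in> V. E x w}"
    obtain P where P: "P \<subseteq> {w \<in> V. E x w} - {y}" "int (card P) = k x" "P \<subseteq> V - {x, y}"
      using getP[OF x y exy] by blast
    have fP: "finite P" using P(3) fin finite_subset by blast
    have "{w \<in> P. E x w} = P" using P(1) by auto
    then have b: "int (card {w \<in> P. E y w}) = k y" using K[OF x y exy P(3)] P(2) by simp
    have zP: "z \<notin> P" using nz P(1) by auto
    have zy: "z \<noteq> y" using z irr by auto
    have P': "insert z P \<subseteq> V - {x, y}" using P(3) z zy by auto
    have "{w \<in> insert z P. E x w} = P" using P(1) nz z by auto
    then have "int (card {w \<in> insert z P. E y w}) = k y" using K[OF x y exy P'] P(2) by simp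
    moreover have "{w \<in> insert z P. E y w} = insert z {w \<in> P. E y w}" using z by auto
    moreover have "card (insert z {w \<in> P. E y w}) = Suc (card {w \<in> P. E y w})" using zP fP by simp
    ultimately show False using b by simp
  qed
qed

lemma edge_eq:
  assumes x: "x \<in> V" and y: "y \<in> V" and exy: "E x y"
  shows "c x = c y" "k x = k y" "insert x {w \<in> V. E x w} = insert y {w \<in> V. E y w}"
proof -
  obtain P where P: "P \<subseteq> {w \<in> V. E x w} - {y}" "int (card P) = k x" "P \<subseteq> V - {x, y}"
    using getP[OF x y exy] by blast
  have "{w \<in> P. E x w} = P" using P(1) by auto
  then have R: "int (card {w \<in> P. E y w}) = k y" "c x = c y" using K[OF x y exy P(3)] P(2) by simp_all
  show "c x = c y" by (rule R(2))
  have "P \<subseteq> {w \<in> V. E y w}" using P(1) nbr_sub[OF y x sym[OF exy]] by auto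
  then have "{w \<in> P. E y w} = P" by auto
  then show "k x = k y" using R(1) P(2) by simp
  show "insert x {w \<in> V. E x w} = insert y {w \<in> V. E y w}"
    using nbr_sub[OF x y exy] nbr_sub[OF y x sym[OF exy]] x y exy sym[OF exy] by auto
qed

lemma path_eq:
  assumes "E\<^sup>*\<^sup>* u v" "u \<in> V"
  shows "v \<in> V \<and> c u = c v \<and> k u = k v \<and> insert u {w \<in> V. E u w} = insert v {w \<in> V. E v w}"
  using assms
proof (induction rule: rtranclp_induct)
  case base then show ?case by simp
next
  case (step y z)
  then have y: "y \<in> V" and z: "z \<in> V" using inV2 by auto
  show ?case using step edge_eq[OF y z step(2)] z by auto
qed

end

lemma conclusion:
  assumes conn: "connected_graph V E"
  shows "(\<forall>u\<in>V. k u = int (degree V E u)) \<or> (is_clique V E \<and> (\<forall>u\<in>V. \<forall>v\<in>V. c u = c v \<and> k u = k v))"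
proof (cases "\<exists>u\<in>V. k u = int (degree V E u)")
  case True
  then obtain u where u: "u \<in> V" "k u = int (degree V E u)" by blast
  have R: "v \<in> V \<and> k v = int (degree V E v)" if "E\<^sup>*\<^sup>* u v" for v
    using that
  proof (induction rule: rtranclp_induct)
    case base then show ?case using u by simp
  next
    case (step y z)
    then have y: "y \<in> V" and ky: "k y = int (degree V E y)" by auto
    have z: "z \<in> V" using inV2[OF step.hyps(2)] .
    show ?case using step1[OF y z step.hyps(2) ky] z by simp
  qed
  have "k v = int (degree V E v)" if "v \<in> V" for v
  proof -
    have "E\<^sup>*\<^sup>* u v" using conn u(1) that unfolding connected_graph_def by blast
    then show ?thesis using R by blast
  qed
  then show ?thesis by blast
next
  case False
  have lt: "k u < int (degree V E u)" if "u \<in> V" for u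
    using False kr[OF that] that by auto
  have P: "v \<in> V \<and> c u = c v \<and> k u = k v \<and> insert u {w \<in> V. E u w} = insert v {w \<in> V. E v w}"
    if "u \<in> V" "v \<in> V" for u v
  proof -
    have pth: "E\<^sup>*\<^sup>* u v" using conn that unfolding connected_graph_def by blast
    show ?thesis using path_eq[OF lt pth that(1)] by simp
  qed
  have "is_clique V E" unfolding is_clique_def
  proof (intro ballI impI)
    fix u v assume uv: "u \<in> V" "v \<in> V" and ne: "u \<noteq> v"
    have "insert u {w \<in> V. E u w} = insert v {w \<in> V. E v w}" using P[OF uv] by blast
    then have "v \<in> insert u {w \<in> V. E u w}" by (metis insertI1)
    then show "E u v" using ne by simp
  qed
  moreover have "\<forall>u\<in>V. \<forall>v\<in>V. c u = c v \<and> k u = k v"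
  proof (intro ballI)
    fix u v assume uv: "u \<in> V" "v \<in> V"
    show "c u = c v \<and> k u = k v" using P[OF uv] by blast
  qed
  ultimately show ?thesis by blast
qed

end




lemma clique_upper:
  assumes sg: "simple_graph V E" and cp: "\<And>u. u \<in> V \<Longrightarrow> c u > 0"
    and kp: "\<And>u. u \<in> V \<Longrightarrow> k u \<ge> 0"
    and kr: "\<And>u. u \<in> V \<Longrightarrow> k u \<le> int (degree V E u)"
    and cl: "is_clique V E" and cst: "\<forall>u\<in>V. \<forall>v\<in>V. c u = c v \<and> k u = k v"
    and I: "kdegenerate V E k I"
  shows "(\<Sum>u\<in>I. c u) \<le> fW E c k V"
proof -
  have fin: "finite V" and irr: "\<And>v. \<not> E v v" using sg unfolding simple_graph_def by blast+
  have IV: "I \<subseteq> V" using I by (simp add: kdegenerate_def)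
  show ?thesis
  proof (cases "V = {}")
    case True then show ?thesis using IV by (simp add: fW_def)
  next
    case False
    then obtain v0 where v0: "v0 \<in> V" by blast
    have "card V > 0" using card_gt_0_iff[THEN iffD2, OF conjI[OF False fin]] .
    then have cV: "card V \<ge> 1" by linarith
    have deg: "degree V E u = card V - 1" if "u \<in> V" for u
    proof -
      have "{w \<in> V. E u w} = V - {u}" using cl irr that unfolding is_clique_def by auto
      then show ?thesis using that fin unfolding degree_def by simp
    qed
    have "fW E c k V = (\<Sum>u\<in>V. c v0 * ((of_int (k v0) + 1) / real (card V)))"
      unfolding fW_def
    proof (intro sum.cong refl)
      fix u assume u: "u \<in> V"
      have r: "real (card V - 1) + 1 = real (card V)" using cV by simp
      have "c u = c v0 \<and> k u = k v0" using cst[rule_format, OF u v0] .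
      then have cu: "c u = c v0" and ku: "k u = k v0" by blast+
      have pe: "pr (k u) (degree V E u) = (of_int (k v0) + 1) / real (card V)"
      proof (cases "int (card V - 1) \<le> k v0")
        case True
        then have "k v0 = int (card V - 1)" using kr[OF u] ku deg[OF u] by simp
        then have "of_int (k v0) + 1 = real (card V)" using r by simp
        then show ?thesis using True ku deg[OF u] cV by (simp add: pr_def)
      next
        case False
        then show ?thesis using ku deg[OF u] r by (simp add: pr_def)
      qed
      show "c u * pr (k u) (degree V E u) = c v0 * ((of_int (k v0) + 1) / real (card V))"
        using cu pe by simp
    qed
    also have "\<dots> = c v0 * (of_int (k v0) + 1)" using cV by simp
    finally have fv: "fW E c k V = c v0 * (of_int (k v0) + 1)" .
    obtain xs where xs: "distinct xs" "set xs = I"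
      "\<forall>i < length xs. int (card {j. j < i \<and> E (xs ! i) (xs ! j)}) \<le> k (xs ! i)"
      using I unfolding kdegenerate_def by blast
    have lenI: "real (card I) \<le> of_int (k v0) + 1"
    proof (cases "xs = []")
      case True then show ?thesis using xs kp[OF v0] by simp
    next
      case False
      define i where "i = length xs - 1"
      have i: "i < length xs" using False unfolding i_def by simp
      have EQ: "{j. j < i \<and> E (xs ! i) (xs ! j)} = {j. j < i}"
      proof -
        have "E (xs ! i) (xs ! j)" if "j < i" for j
        proof -
          have "xs ! i \<noteq> xs ! j" using xs(1) i that by (simp add: nth_eq_iff_index_eq)
          moreover have "xs ! i \<in> set xs" "xs ! j \<in> set xs" using i that by simp_all
          then have "xs ! i \<in> V" "xs ! j \<in> V" using IV xs(2) by auto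
          ultimately show ?thesis using cl unfolding is_clique_def by blast
        qed
        then show ?thesis by auto
      qed
      have E1: "int (card {j. j < i \<and> E (xs ! i) (xs ! j)}) \<le> k (xs ! i)" using xs(3) i by blast
      have A: "int i \<le> k (xs ! i)" using E1 unfolding EQ by simp
      have "xs ! i \<in> V" using IV xs(2) nth_mem[OF i] by auto
      then have B: "k (xs ! i) = k v0" using cst[rule_format, OF _ v0] by blast
      have "card I = length xs" using xs(1,2) distinct_card by metis
      then have C: "card I = i + 1" using i unfolding i_def by simp
      show ?thesis using A B C by simp
    qed
    have "(\<Sum>u\<in>I. c u) = (\<Sum>u\<in>I. c v0)"
    proof (rule sum.cong[OF refl])
      fix u assume "u \<in> I"
      then have "u \<in> V" using IV by blast
      then show "c u = c v0" using cst[rule_format, OF _ v0] by blast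
    qed
    also have "\<dots> = c v0 * real (card I)" by simp
    also have "\<dots> \<le> c v0 * (of_int (k v0) + 1)" using lenI cp[OF v0] by simp
    finally show ?thesis using fv by simp
  qed
qed




lemma stmt_sum_eq:
  assumes "\<And>u. u \<in> V \<Longrightarrow> 0 \<le> k u \<and> k u \<le> int (degree V E u)"
  shows "(\<Sum>u\<in>V. c u * (real_of_int (k u) + 1) / (real (degree V E u) + 1)) = fW E c k V"
  unfolding fW_def
proof (intro sum.cong refl)
  fix u assume u: "u \<in> V"
  show "c u * (real_of_int (k u) + 1) / (real (degree V E u) + 1) = c u * pr (k u) (degree V E u)"
  proof (cases "int (degree V E u) \<le> k u")
    case True
    then have "k u = int (degree V E u)" using assms[OF u] by simp
    then show ?thesis by (simp add: pr_def)
  qed (simp add: pr_def)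
qed

theorem theorem2:
  fixes V :: "'a set" and E :: "'a \<Rightarrow> 'a \<Rightarrow> bool"
    and c :: "'a \<Rightarrow> real" and \<kappa> :: "'a \<Rightarrow> int"
  assumes "simple_graph V E"
    and "connected_graph V E"
    and "\<And>u. u \<in> V \<Longrightarrow> c u > 0"
    and "\<And>u. u \<in> V \<Longrightarrow> 0 \<le> \<kappa> u \<and> \<kappa> u \<le> int (degree V E u)"
  shows "alpha V E c \<kappa> = (\<Sum>u\<in>V. c u * (real_of_int (\<kappa> u) + 1) / (real (degree V E u) + 1))
     \<longleftrightarrow> ((\<forall>u\<in>V. \<kappa> u = int (degree V E u))
          \<or> (is_clique V E \<and> (\<forall>u\<in>V. \<forall>v\<in>V. c u = c v \<and> \<kappa> u = \<kappa> v)))"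
proof -
  note sg = assms(1) and conn = assms(2) and cp = assms(3) and kr = assms(4)
  have fin: "finite V" and irr: "\<And>v. \<not> E v v" and sym: "\<And>u v. E u v \<Longrightarrow> E v u"
    and inV2: "\<And>u v. E u v \<Longrightarrow> v \<in> V"
    using sg unfolding simple_graph_def by blast+
  have kp: "\<And>u. u \<in> V \<Longrightarrow> \<kappa> u \<ge> 0" using kr by simp
  have feq: "(\<Sum>u\<in>V. c u * (real_of_int (\<kappa> u) + 1) / (real (degree V E u) + 1)) = fW E c \<kappa> V"
    by (rule stmt_sum_eq[OF kr])
  have ge: "fW E c \<kappa> V \<le> alpha V E c \<kappa>" by (rule alpha_ge_f[OF sg kp])
  obtain I where I: "kdegenerate V E \<kappa> I" "alpha V E c \<kappa> = (\<Sum>u\<in>I. c u)"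
    using alpha_facts(2)[OF sg] by blast
  have IV: "I \<subseteq> V" using I(1) by (simp add: kdegenerate_def)
  show ?thesis unfolding feq
  proof
    assume eq: "alpha V E c \<kappa> = fW E c \<kappa> V"
    interpret ctx V E c \<kappa> "alpha V E c \<kappa>"
      apply unfold_locales
         apply (rule sg)
        apply (erule cp)
       apply (erule kr)
      by (rule all_eq[where V=V and E=E and k=\<kappa> and c=c, OF sg kp eq])
    show "(\<forall>u\<in>V. \<kappa> u = int (degree V E u)) \<or> (is_clique V E \<and> (\<forall>u\<in>V. \<forall>v\<in>V. c u = c v \<and> \<kappa> u = \<kappa> v))"
      by (rule conclusion[OF conn])
  next
    assume H: "(\<forall>u\<in>V. \<kappa> u = int (degree V E u)) \<or> (is_clique V E \<and> (\<forall>u\<in>V. \<forall>v\<in>V. c u = c v \<and> \<kappa> u = \<kappa> v))"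
    have "alpha V E c \<kappa> \<le> fW E c \<kappa> V"
    proof (cases "\<forall>u\<in>V. \<kappa> u = int (degree V E u)")
      case True
      have "fW E c \<kappa> V = (\<Sum>u\<in>V. c u)" unfolding fW_def using True by (intro sum.cong) (auto simp: pr_def)
      moreover have "(\<Sum>u\<in>I. c u) \<le> (\<Sum>u\<in>V. c u)"
        by (rule sum_mono2[OF fin IV]) (auto intro: less_imp_le cp)
      ultimately show ?thesis using I(2) by simp
    next
      case False
      then have cl: "is_clique V E" and cst: "\<forall>u\<in>V. \<forall>v\<in>V. c u = c v \<and> \<kappa> u = \<kappa> v" using H by blast+
      have "(\<Sum>u\<in>I. c u) \<le> fW E c \<kappa> V"
      proof -
        have kr2: "\<And>u. u \<in> V \<Longrightarrow> \<kappa> u \<le> int (degree V E u)" using kr by simp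
        show ?thesis by (rule clique_upper[OF sg cp kp kr2 cl cst I(1)])
      qed
      then show ?thesis using I(2) by simp
    qed
    then show "alpha V E c \<kappa> = fW E c \<kappa> V" using ge by simp
  qed
qed


end
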